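(* Let $G$ be a $6$-regular graph, $\mathcal S$ a canonical path partition of $G$, and $P$ a path component with end-vertices $o_1,o_2$. Let $x_1,x_2\in V_2$ be path neighbors on $P$, with $x_1$ immediately preceding $x_2$ when $P$ is traversed from $o_1$ to $o_2$. If $x_1$ goes to $o_2$, then $o_2$ is the only vertex that $x_2$ goes to.
   Context: All graphs are finite, simple and undirected. A path partition of $G=(V,E)$ is a set of vertex-disjoint paths (single vertices allowed) covering $V$; its members are components. A component with $t\ge3$ vertices is a cycle component if the subgraph induced on its vertex set has a spanning cycle; a one-vertex component is an isolated vertex; every other component is a path component. A path partition is canonical if (1) it has the minimum number of components among all path partitions of $G$; (2) among those, it has the maximum number of cycle components; (3) it has no isolated vertices. Given a canonical path partition $\mathcal S$ of $G$: two vertices are path neighbors if they are consecutive on a path component. An edge of $G$ is a free edge unless it joins two path neighbors or has both endpoints in the same cycle component. $V_1$ is the set of end-vertices of path components together with all vertices of cycle components. $V_2$ is the set of vertices not in $V_1$ that are joined by a free edge to a vertex of $V_1$. A balanced edge is a free edge with one endpoint in $V_1$ and the other in $V_2$; for $x\in V_2$, $y\in V_1$ we say $x$ goes to $y$ if $xy$ is a balanced edge. *)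

theory Defs
  imports Main
begin

definition graph :: "'a set \<Rightarrow> ('a \<Rightarrow> 'a \<Rightarrow> bool) \<Rightarrow> bool" where
  "graph V E \<longleftrightarrow> finite V \<and> (\<forall>u v. E u v \<longrightarrow> u \<in> V \<and> v \<in> V)
     \<and> (\<forall>u v. E u v \<longrightarrow> E v u) \<and> (\<forall>u. \<not> E u u)"

definition regular :: "nat \<Rightarrow> 'a set \<Rightarrow> ('a \<Rightarrow> 'a \<Rightarrow> bool) \<Rightarrow> bool" where
  "regular k V E \<longleftrightarrow> graph V E \<and> (\<forall>v\<in>V. card {u\<in>V. E v u} = k)"

definition is_path :: "'a set \<Rightarrow> ('a \<Rightarrow> 'a \<Rightarrow> bool) \<Rightarrow> 'a list \<Rightarrow> bool" where
  "is_path V E p \<longleftrightarrow> p \<noteq> [] \<and> distinct p \<and> set p \<subseteq> V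
     \<and> (\<forall>i. Suc i < length p \<longrightarrow> E (p ! i) (p ! Suc i))"

definition path_partition :: "'a set \<Rightarrow> ('a \<Rightarrow> 'a \<Rightarrow> bool) \<Rightarrow> 'a list set \<Rightarrow> bool" where
  "path_partition V E S \<longleftrightarrow> (\<forall>p\<in>S. is_path V E p)
     \<and> (\<forall>p\<in>S. \<forall>q\<in>S. p \<noteq> q \<longrightarrow> set p \<inter> set q = {})
     \<and> (\<Union>p\<in>S. set p) = V"

definition has_spanning_cycle :: "('a \<Rightarrow> 'a \<Rightarrow> bool) \<Rightarrow> 'a set \<Rightarrow> bool" where
  "has_spanning_cycle E W \<longleftrightarrow> (\<exists>c. distinct c \<and> set c = W \<and> length c \<ge> 3
     \<and> (\<forall>i. Suc i < length c \<longrightarrow> E (c ! i) (c ! Suc i))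
     \<and> E (last c) (hd c))"

definition cycle_component :: "('a \<Rightarrow> 'a \<Rightarrow> bool) \<Rightarrow> 'a list \<Rightarrow> bool" where
  "cycle_component E p \<longleftrightarrow> length p \<ge> 3 \<and> has_spanning_cycle E (set p)"

definition isolated_component :: "'a list \<Rightarrow> bool" where
  "isolated_component p \<longleftrightarrow> length p = 1"

definition path_component :: "('a \<Rightarrow> 'a \<Rightarrow> bool) \<Rightarrow> 'a list \<Rightarrow> bool" where
  "path_component E p \<longleftrightarrow> \<not> cycle_component E p \<and> \<not> isolated_component p"

definition num_cycle_components :: "('a \<Rightarrow> 'a \<Rightarrow> bool) \<Rightarrow> 'a list set \<Rightarrow> nat" where
  "num_cycle_components E S = card {p\<in>S. cycle_component E p}"

definition canonical :: "'a set \<Rightarrow> ('a \<Rightarrow> 'a \<Rightarrow> bool) \<Rightarrow> 'a list set \<Rightarrow> bool" where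
  "canonical V E S \<longleftrightarrow> path_partition V E S
     \<and> (\<forall>T. path_partition V E T \<longrightarrow> card S \<le> card T)
     \<and> (\<forall>T. path_partition V E T \<and> card T = card S
            \<longrightarrow> num_cycle_components E T \<le> num_cycle_components E S)
     \<and> (\<forall>p\<in>S. \<not> isolated_component p)"

definition path_neighbors :: "('a \<Rightarrow> 'a \<Rightarrow> bool) \<Rightarrow> 'a list set \<Rightarrow> 'a \<Rightarrow> 'a \<Rightarrow> bool" where
  "path_neighbors E S u v \<longleftrightarrow> (\<exists>p\<in>S. path_component E p \<and>
     (\<exists>i. Suc i < length p \<and> ((p ! i = u \<and> p ! Suc i = v) \<or> (p ! i = v \<and> p ! Suc i = u))))"

definition free_edge :: "('a \<Rightarrow> 'a \<Rightarrow> bool) \<Rightarrow> 'a list set \<Rightarrow> 'a \<Rightarrow> 'a \<Rightarrow> bool" where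
  "free_edge E S u v \<longleftrightarrow> E u v \<and> \<not> path_neighbors E S u v
     \<and> \<not> (\<exists>p\<in>S. cycle_component E p \<and> u \<in> set p \<and> v \<in> set p)"

definition V1 :: "('a \<Rightarrow> 'a \<Rightarrow> bool) \<Rightarrow> 'a list set \<Rightarrow> 'a set" where
  "V1 E S = {v. \<exists>p\<in>S. (path_component E p \<and> (v = hd p \<or> v = last p))
                      \<or> (cycle_component E p \<and> v \<in> set p)}"

definition V2 :: "'a set \<Rightarrow> ('a \<Rightarrow> 'a \<Rightarrow> bool) \<Rightarrow> 'a list set \<Rightarrow> 'a set" where
  "V2 V E S = {x\<in>V. x \<notin> V1 E S \<and> (\<exists>y\<in>V1 E S. free_edge E S x y)}"

definition goes_to :: "'a set \<Rightarrow> ('a \<Rightarrow> 'a \<Rightarrow> bool) \<Rightarrow> 'a list set \<Rightarrow> 'a \<Rightarrow> 'a \<Rightarrow> bool" where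
  "goes_to V E S x y \<longleftrightarrow> x \<in> V2 V E S \<and> y \<in> V1 E S \<and> free_edge E S x y"

end

theory Submission
  imports Defs
begin

lemma is_path_succ:
  "is_path V E p \<longleftrightarrow> p \<noteq> [] \<and> distinct p \<and> set p \<subseteq> V \<and> successively E p"
  unfolding is_path_def successively_conv_nth by blast

lemma pp_finite:
  assumes "path_partition V E S" "finite V"
  shows "finite S"
proof -
  have "S \<subseteq> {xs. set xs \<subseteq> V \<and> length xs \<le> card V}"
  proof
    fix p assume "p \<in> S"
    then have "is_path V E p" using assms(1) unfolding path_partition_def by blast
    then have "distinct p" "set p \<subseteq> V" unfolding is_path_def by auto
    then have "length p \<le> card V" using card_mono[OF assms(2)] distinct_card by metis
    then show "p \<in> {xs. set xs \<subseteq> V \<and> length xs \<le> card V}" using \<open>set p \<subseteq> V\<close> by auto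
  qed
  then show ?thesis using finite_subset finite_lists_length_le[OF assms(2)] by blast
qed

lemma merge:
  assumes pp: "path_partition V E S" and fin: "finite S"
  and P: "P \<in> S" "R \<in> S" "P \<noteq> R"
  and c: "is_path V E c" "set c = set P"
  and r: "is_path V E r" "set r = set R"
  and e: "E (last c) (hd r)"
  shows "\<exists>T. path_partition V E T \<and> card T < card S"
proof -
  define T where "T = insert (c @ r) (S - {P, R})"
  have disj: "set P \<inter> set R = {}" using pp P unfolding path_partition_def by blast
  have path: "is_path V E (c @ r)" using c r e disj unfolding is_path_succ
    by (auto simp: successively_append_iff)
  have cne: "c \<noteq> []" using c unfolding is_path_def by auto
  have notin: "c @ r \<notin> S - {P,R}"
  proof
    assume a: "c @ r \<in> S - {P,R}"
    then have "set (c @ r) \<inter> set P = {}" using pp P unfolding path_partition_def by blast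
    moreover have "hd c \<in> set (c @ r)" "hd c \<in> set P" using cne c(2) by auto
    ultimately show False by blast
  qed
  have sub: "{P, R} \<subseteq> S" using P by auto
  have c2: "card {P,R} = 2" using P by auto
  have cS: "card S \<ge> 2" using card_mono[OF fin sub] c2 by simp
  have cd: "card (S - {P,R}) = card S - 2" using card_Diff_subset[OF _ sub] c2 by simp
  have cT: "card T = card S - 1" unfolding T_def using notin fin cd cS by simp
  have ppT: "path_partition V E T"
    unfolding path_partition_def
  proof (intro conjI)
    show "\<forall>p\<in>T. is_path V E p" using pp path unfolding T_def path_partition_def by auto
    show "\<forall>p\<in>T. \<forall>q\<in>T. p \<noteq> q \<longrightarrow> set p \<inter> set q = {}"
    proof (intro ballI impI)
      fix p q assume "p \<in> T" "q \<in> T" "p \<noteq> q"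
      have D: "\<And>a b. a \<in> S \<Longrightarrow> b \<in> S \<Longrightarrow> a \<noteq> b \<Longrightarrow> set a \<inter> set b = {}"
        using pp unfolding path_partition_def by blast
      have cr: "set (c @ r) = set P \<union> set R" using c(2) r(2) by auto
      have DPR: "\<And>a. a \<in> S - {P,R} \<Longrightarrow> set a \<inter> set (c @ r) = {}"
        using D[of _ P] D[of _ R] P cr by blast
      show "set p \<inter> set q = {}"
      proof (cases "p = c @ r")
        case True
        then have "q \<in> S - {P,R}" using \<open>q \<in> T\<close> \<open>p \<noteq> q\<close> unfolding T_def by auto
        then show ?thesis using DPR True by blast
      next
        case False
        then have pS: "p \<in> S - {P,R}" using \<open>p \<in> T\<close> unfolding T_def by auto
        show ?thesis
        proof (cases "q = c @ r")
          case True then show ?thesis using DPR pS by blast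
        next
          case False
          then have "q \<in> S - {P,R}" using \<open>q \<in> T\<close> unfolding T_def by auto
          then show ?thesis using D[of p q] pS \<open>p \<noteq> q\<close> by blast
        qed
      qed
    qed
    have U: "(\<Union>p\<in>S. set p) = V" using pp unfolding path_partition_def by blast
    show "(\<Union>p\<in>T. set p) = V"
    proof -
      have "(\<Union>p\<in>T. set p) = set P \<union> set R \<union> (\<Union>p\<in>S - {P,R}. set p)"
        unfolding T_def using c(2) r(2) by auto
      also have "\<dots> = (\<Union>p\<in>S. set p)" using P by blast
      finally show ?thesis using U by simp
    qed
  qed
  show ?thesis using ppT cT cS by auto
qed

theorem mainTheorem6:
  fixes V :: "'a set" and E :: "'a \<Rightarrow> 'a \<Rightarrow> bool" and S :: "'a list set"
    and P Q :: "'a list" and i :: nat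
  assumes "regular 6 V E"
    and "canonical V E S"
    and "P \<in> S" and "path_component E P"
    and "Q = P \<or> Q = rev P"
    and "Suc i < length Q"
    and "Q ! i \<in> V2 V E S" and "Q ! Suc i \<in> V2 V E S"
    and "goes_to V E S (Q ! i) (last Q)"
  shows "{y. goes_to V E S (Q ! Suc i) y} = {last Q}"
proof -
  have G: "graph V E" using assms(1) unfolding regular_def by auto
  have sym: "\<And>u v. E u v \<Longrightarrow> E v u" and finV: "finite V" using G unfolding graph_def by auto
  have pp: "path_partition V E S" using assms(2) unfolding canonical_def by auto
  have minS: "\<And>T. path_partition V E T \<Longrightarrow> card S \<le> card T" using assms(2) unfolding canonical_def by auto
  have fin: "finite S" using pp_finite[OF pp finV] .
  have Ppath: "is_path V E P" using pp assms(3) unfolding path_partition_def by auto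
  have Qpath: "is_path V E Q"
  proof -
    have "successively E (rev P) = successively E P"
      by (simp, rule successively_cong) (auto intro: sym)
    then show ?thesis using assms(5) Ppath unfolding is_path_succ by auto
  qed
  have setQ: "set Q = set P" using assms(5) by auto
  have Pne: "P \<noteq> []" using Ppath unfolding is_path_def by auto
  have ends: "{hd Q, last Q} = {hd P, last P}" using assms(5) Pne
    by (auto simp: hd_rev last_rev)
  have endsV1: "hd P \<in> V1 E S" "last P \<in> V1 E S" using assms(3,4) unfolding V1_def by auto
  have "last Q \<in> {hd P, last P}" using ends by blast
  then have lastV1: "last Q \<in> V1 E S" using endsV1 by auto
  have x2nV1: "Q ! Suc i \<notin> V1 E S" using assms(8) unfolding V2_def by auto
  have Qne: "Q \<noteq> []" using Qpath unfolding is_path_def by auto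
  have lastQ: "last Q = Q ! (length Q - 1)" using Qne by (simp add: last_conv_nth)
  have len: "Suc (Suc i) < length Q"
  proof (rule ccontr)
    assume "\<not> ?thesis"
    then have "Suc i = length Q - 1" using assms(6) by auto
    then show False using x2nV1 lastV1 lastQ by auto
  qed
  have e1: "E (Q ! i) (last Q)" using assms(9) unfolding goes_to_def free_edge_def by auto
  define c where "c = take (Suc i) Q @ rev (drop (Suc i) Q)"
  have setc: "set c = set P" using setQ unfolding c_def
    by (metis append_take_drop_id set_append set_rev)
  have distQ: "distinct Q" using Qpath unfolding is_path_def by auto
  have distc: "distinct c" using distQ unfolding c_def
    by (metis append_take_drop_id distinct_append distinct_rev set_rev)
  have succQ: "successively E Q" using Qpath unfolding is_path_succ by auto
  have sT: "successively E (take (Suc i) Q)" and sD: "successively E (drop (Suc i) Q)"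
    using succQ by (metis append_take_drop_id successively_append_iff)+
  have sRD: "successively E (rev (drop (Suc i) Q))"
    using sD by (simp, rule successively_mono) (auto intro: sym)
  have lt: "last (take (Suc i) Q) = Q ! i" using assms(6) by (simp add: take_Suc_conv_app_nth)
  have hrd: "hd (rev (drop (Suc i) Q)) = last Q" using assms(6) by (simp add: hd_rev)
  have succc: "successively E c" unfolding c_def successively_append_iff
    using sT sRD lt hrd e1 by auto
  have cV: "set c \<subseteq> V" using setc Ppath unfolding is_path_def by auto
  have cpath: "is_path V E c" unfolding is_path_succ using succc distc cV c_def Qne assms(6) by auto
  have hdc: "hd c = hd Q" unfolding c_def using assms(6) by (cases Q) auto
  have lastc: "last c = Q ! Suc i" unfolding c_def using assms(6)
    by (simp add: last_rev hd_drop_conv_nth)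
  have lenc: "length c = length Q" unfolding c_def using assms(6) by simp
  have key: "y = last Q" if yV1: "y \<in> V1 E S" and ey: "E (Q ! Suc i) y" for y
  proof (rule ccontr)
    assume yne: "y \<noteq> last Q"
    from yV1 obtain p where pS: "p \<in> S" and
      pc: "(path_component E p \<and> (y = hd p \<or> y = last p)) \<or> (cycle_component E p \<and> y \<in> set p)"
      unfolding V1_def by auto
    show False
    proof (cases "p = P")
      case True
      then have "y = hd P \<or> y = last P" using pc assms(4) unfolding path_component_def by auto
      then have yh: "y = hd Q" using ends yne by auto
      have "has_spanning_cycle E (set P)" unfolding has_spanning_cycle_def
        using distc setc lenc len succc lastc hdc yh ey unfolding successively_conv_nth
        by (intro exI[of _ c]) auto
      moreover have "length P \<ge> 3" using len assms(5) by auto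
      ultimately show False using assms(4) unfolding path_component_def cycle_component_def by auto
    next
      case False
      have ppath: "is_path V E p" using pp pS unfolding path_partition_def by auto
      obtain r where r: "is_path V E r" "set r = set p" "hd r = y"
      proof -
        { assume a: "path_component E p" "y = hd p"
          then have ?thesis using that ppath by auto }
        moreover
        { assume a: "path_component E p" "y = last p"
          have "successively E (rev p) = successively E p"
            by (simp, rule successively_cong) (auto intro: sym)
          then have "is_path V E (rev p)" using ppath unfolding is_path_succ by auto
          moreover have "hd (rev p) = y" using a by (simp add: hd_rev)
          ultimately have ?thesis using that by auto }
        moreover
        { assume a: "cycle_component E p" "y \<in> set p"
          then obtain cy where cy: "distinct cy" "set cy = set p" "length cy \<ge> 3"
            "successively E cy" "E (last cy) (hd cy)"
            unfolding cycle_component_def has_spanning_cycle_def successively_conv_nth by blast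
          obtain k where k: "k < length cy" "cy ! k = y" using a(2) cy(2) by (metis in_set_conv_nth)
          define rr where "rr = drop k cy @ take k cy"
          have rot: "rr = rotate k cy" unfolding rr_def using k by (simp add: rotate_drop_take)
          have s1: "successively E (drop k cy)" and s2: "successively E (take k cy)"
            using cy(4) by (metis append_take_drop_id successively_append_iff)+
          have jn: "take k cy = [] \<or> E (last (drop k cy)) (hd (take k cy))"
          proof (cases k)
            case 0 then show ?thesis by simp
          next
            case (Suc m)
            then have "last (drop k cy) = last cy" using k by (simp add: last_drop)
            moreover have "hd (take k cy) = hd cy" using Suc k by (cases cy) auto
            ultimately show ?thesis using cy(5) by simp
          qed
          have "successively E rr" unfolding rr_def successively_append_iff using s1 s2 jn by auto
          moreover have "distinct rr" "set rr = set p" using rot cy by auto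
          moreover have "set p \<subseteq> V" using ppath unfolding is_path_def by auto
          moreover have "rr \<noteq> []" using k unfolding rr_def by auto
          moreover have "hd rr = y" unfolding rr_def using k by (simp add: hd_drop_conv_nth)
          ultimately have ?thesis using that unfolding is_path_succ by auto }
        ultimately show ?thesis using pc by blast
      qed
      have "E (last c) (hd r)" using lastc r(3) ey by simp
      then obtain T where "path_partition V E T" "card T < card S"
        using merge[OF pp fin assms(3) pS _ cpath setc r(1,2)] False by metis
      then show False using minS by fastforce
    qed
  qed
  show ?thesis
  proof
    show "{y. goes_to V E S (Q ! Suc i) y} \<subseteq> {last Q}"
      using key unfolding goes_to_def free_edge_def by auto
    obtain y0 where "y0 \<in> V1 E S" "free_edge E S (Q ! Suc i) y0"
      using assms(8) unfolding V2_def by auto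
    moreover then have "y0 = last Q" using key unfolding free_edge_def by auto
    ultimately show "{last Q} \<subseteq> {y. goes_to V E S (Q ! Suc i) y}"
      using assms(8) unfolding goes_to_def by auto
  qed
qed

end
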